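(* Let $E/F$ be a quadratic extension of fields of characteristic $0$ and let $\gamma\in\mathrm{GL}_n(E)$ be normal with $\bar\gamma\gamma$ regular semisimple. Then $T_\gamma=\{g\in\mathrm{GL}_n(E):g^{-1}\gamma\bar g=\gamma\}$ is contained in $\mathrm{GL}_n(F)$ and in fact equals the centralizer of $\bar\gamma\gamma$ in $\mathrm{GL}_n(F)$.
   Context: $x\mapsto\bar x$ denotes the nontrivial automorphism of $E/F$ applied entrywise. $\gamma$ is normal if $\bar\gamma\gamma\in\mathrm{GL}_n(F)$. *)

theory Defs
  imports "Jordan_Normal_Form.Gauss_Jordan_Elimination" "Jordan_Normal_Form.Char_Poly"
begin

text \<open>The field extension E/F is modelled by a field E of characteristic 0 together with
  a nontrivial involutive field automorphism c of E (the generator of Gal(E/F));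
  F is the fixed field of c.\<close>

definition quad_conj :: "('a::field_char_0 \<Rightarrow> 'a) \<Rightarrow> bool" where
  "quad_conj c \<longleftrightarrow> (\<forall>x y. c (x + y) = c x + c y) \<and> (\<forall>x y. c (x * y) = c x * c y)
     \<and> c 1 = 1 \<and> (\<forall>x. c (c x) = x) \<and> (\<exists>x. c x \<noteq> x)"

definition GL :: "nat \<Rightarrow> 'a::field mat set" where
  "GL n = {g \<in> carrier_mat n n. invertible_mat g}"

definition GL_fix :: "('a::field \<Rightarrow> 'a) \<Rightarrow> nat \<Rightarrow> 'a mat set" where
  "GL_fix c n = {g \<in> GL n. \<forall>i<n. \<forall>j<n. c (g $$ (i, j)) = g $$ (i, j)}"

definition mat_inv :: "'a::field mat \<Rightarrow> 'a mat" where
  "mat_inv g = the (mat_inverse g)"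

text \<open>Regular semisimple in GL_n: the characteristic polynomial has distinct roots
  (over an algebraic closure), i.e. it is separable.\<close>
definition regular_semisimple :: "nat \<Rightarrow> 'a::field mat \<Rightarrow> bool" where
  "regular_semisimple n A \<longleftrightarrow> A \<in> GL n \<and> coprime (char_poly A) (pderiv (char_poly A))"

definition T_set :: "('a::field \<Rightarrow> 'a) \<Rightarrow> nat \<Rightarrow> 'a mat \<Rightarrow> 'a mat set" where
  "T_set c n \<gamma> = {g \<in> GL n. mat_inv g * \<gamma> * map_mat c g = \<gamma>}"

end

theory Submission
  imports Defs "HOL-Algebra.Algebraic_Closure_Type"
begin

lemma diag_entry_mult:
  fixes M N :: "'b::comm_ring_1 mat"
  assumes M: "M \<in> carrier_mat n n" and N: "N \<in> carrier_mat n n"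
    and dM: "\<And>k l. k < n \<Longrightarrow> l < n \<Longrightarrow> k \<noteq> l \<Longrightarrow> M $$ (k,l) = 0"
    and kn: "k < n" and ln: "l < n"
  shows "(M * N) $$ (k,l) = M $$ (k,k) * N $$ (k,l)"
proof -
  have "(M * N) $$ (k,l) = (\<Sum>i\<in>{0..<n}. M $$ (k,i) * N $$ (i,l))"
    using M N kn ln by (simp add: scalar_prod_def)
  also have "\<dots> = (\<Sum>i\<in>{0..<n}. if i = k then M $$ (k,k) * N $$ (k,l) else 0)"
    by (rule sum.cong) (auto simp: dM kn)
  also have "\<dots> = M $$ (k,k) * N $$ (k,l)" using kn by simp
  finally show ?thesis .
qed

lemma diag_commute:
  fixes M N :: "'b::comm_ring_1 mat"
  assumes M: "M \<in> carrier_mat n n" and N: "N \<in> carrier_mat n n"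
    and dM: "\<And>k l. k < n \<Longrightarrow> l < n \<Longrightarrow> k \<noteq> l \<Longrightarrow> M $$ (k,l) = 0"
    and dN: "\<And>k l. k < n \<Longrightarrow> l < n \<Longrightarrow> k \<noteq> l \<Longrightarrow> N $$ (k,l) = 0"
  shows "M * N = N * M"
proof (rule eq_matI)
  fix k l assume k: "k < dim_row (N * M)" and l: "l < dim_col (N * M)"
  hence kn: "k < n" and ln: "l < n" using M N by auto
  show "(M * N) $$ (k,l) = (N * M) $$ (k,l)"
    using diag_entry_mult[OF M N dM kn ln] diag_entry_mult[OF N M dN kn ln]
      kn ln dM[of k l] dN[of k l] by (cases "k = l") (auto simp: mult.commute)
qed (use M N in auto)

lemma diag_entry_mult_right:
  fixes M N :: "'b::comm_ring_1 mat"
  assumes M: "M \<in> carrier_mat n n" and N: "N \<in> carrier_mat n n"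
    and dM: "\<And>k l. k < n \<Longrightarrow> l < n \<Longrightarrow> k \<noteq> l \<Longrightarrow> M $$ (k,l) = 0"
    and kn: "k < n" and ln: "l < n"
  shows "(N * M) $$ (k,l) = N $$ (k,l) * M $$ (l,l)"
proof -
  have "(N * M) $$ (k,l) = (\<Sum>i\<in>{0..<n}. N $$ (k,i) * M $$ (i,l))"
    using M N kn ln by (simp add: scalar_prod_def)
  also have "\<dots> = (\<Sum>i\<in>{0..<n}. if i = l then N $$ (k,l) * M $$ (l,l) else 0)"
    by (rule sum.cong) (auto simp: dM ln)
  also have "\<dots> = N $$ (k,l) * M $$ (l,l)" using ln by simp
  finally show ?thesis .
qed

lemma mat_vec_entry:
  assumes "M \<in> carrier_mat n n" "w \<in> carrier_vec n" "k < n"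
  shows "(M *\<^sub>v w) $ k = (\<Sum>i\<in>{0..<n}. M $$ (k,i) * w $ i)"
  using assms by (simp add: scalar_prod_def)

lemma comm_distinct_eig:
  fixes A B C :: "'b::field mat"
  assumes A: "A \<in> carrier_mat n n" and B: "B \<in> carrier_mat n n" and C: "C \<in> carrier_mat n n"
    and lam_inj: "\<And>i j. i < n \<Longrightarrow> j < n \<Longrightarrow> lam i = lam j \<Longrightarrow> i = j"
    and ev: "\<And>i. i < n \<Longrightarrow> eigenvalue A (lam i)"
    and AB: "A * B = B * A" and AC: "A * C = C * A"
  shows "B * C = C * B"
proof -
  have "\<forall>i. \<exists>w. i < n \<longrightarrow> eigenvector A w (lam i)"
    using ev unfolding eigenvalue_def by blast
  then obtain v where v: "\<And>i. i < n \<Longrightarrow> eigenvector A (v i) (lam i)"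
    by metis
  have vc: "v i \<in> carrier_vec n" and Av: "A *\<^sub>v v i = lam i \<cdot>\<^sub>v v i" and vnz: "v i \<noteq> 0\<^sub>v n"
    if "i < n" for i using v[OF that] A unfolding eigenvector_def by auto
  define P where "P = mat n n (\<lambda>(k,i). v i $ k)"
  define D where "D = mat n n (\<lambda>(k,i). if k = i then lam k else (0::'b))"
  have P: "P \<in> carrier_mat n n" and D: "D \<in> carrier_mat n n" unfolding P_def D_def by auto
  have dD: "\<And>k l. k < n \<Longrightarrow> l < n \<Longrightarrow> k \<noteq> l \<Longrightarrow> D $$ (k,l) = 0" unfolding D_def by auto
  have colP: "col P i = v i" if "i < n" for i
    using vc[OF that] that unfolding P_def by (auto intro!: eq_vecI)
  have APe: "(A * P) $$ (k,i) = lam i * v i $ k" if "k < n" "i < n" for k i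
  proof -
    have "(A * P) $$ (k,i) = row A k \<bullet> col P i" using A P that by simp
    also have "\<dots> = (A *\<^sub>v v i) $ k" using A that colP by simp
    also have "\<dots> = lam i * v i $ k" using Av[OF that(2)] vc[OF that(2)] that by simp
    finally show ?thesis .
  qed
  have AP: "A * P = P * D"
  proof (rule eq_matI)
    fix k i assume "k < dim_row (P * D)" "i < dim_col (P * D)"
    hence ki: "k < n" "i < n" using P D by auto
    show "(A * P) $$ (k,i) = (P * D) $$ (k,i)"
      using APe[OF ki] diag_entry_mult_right[OF D P dD ki] ki
      by (simp add: P_def D_def mult.commute)
  qed (use A P D in auto)
  have Pv: "(P *\<^sub>v w) $ k = (\<Sum>i\<in>{0..<n}. v i $ k * w $ i)" if "w \<in> carrier_vec n" "k < n" for w k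
    using that P unfolding P_def by (simp add: scalar_prod_def)
  have APv: "(A *\<^sub>v (P *\<^sub>v w)) $ k = (\<Sum>i\<in>{0..<n}. lam i * v i $ k * w $ i)"
    if w: "w \<in> carrier_vec n" and k: "k < n" for w k
  proof -
    have "A *\<^sub>v (P *\<^sub>v w) = (A * P) *\<^sub>v w" using assoc_mult_mat_vec[OF A P w] by simp
    hence "(A *\<^sub>v (P *\<^sub>v w)) $ k = (\<Sum>i\<in>{0..<n}. (A * P) $$ (k,i) * w $ i)"
      using mat_vec_entry[of "A * P" n w k] A P w k by simp
    also have "\<dots> = (\<Sum>i\<in>{0..<n}. lam i * v i $ k * w $ i)"
      using APe k by (intro sum.cong) auto
    finally show ?thesis .
  qed
  have ker: "\<forall>w \<in> carrier_vec n. (\<forall>k. m \<le> k \<longrightarrow> k < n \<longrightarrow> w $ k = 0) \<longrightarrow> P *\<^sub>v w = 0\<^sub>v n \<longrightarrow> w = 0\<^sub>v n"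
    if "m \<le> n" for m
    using that
  proof (induction m)
    case 0
    show ?case by (auto intro!: eq_vecI)
  next
    case (Suc m)
    show ?case
    proof (intro ballI impI)
      fix w :: "'b vec" assume w: "w \<in> carrier_vec n"
        and supp: "\<forall>k. Suc m \<le> k \<longrightarrow> k < n \<longrightarrow> w $ k = 0" and Pw: "P *\<^sub>v w = 0\<^sub>v n"
      have mn: "m < n" using Suc by auto
      define w' where "w' = vec n (\<lambda>i. (lam i - lam m) * w $ i)"
      have w': "w' \<in> carrier_vec n" unfolding w'_def by auto
      have "P *\<^sub>v w' = 0\<^sub>v n"
      proof (rule eq_vecI)
        fix k assume "k < dim_vec (0\<^sub>v n :: 'b vec)"
        hence k: "k < n" by simp
        have "(P *\<^sub>v w') $ k = (\<Sum>i\<in>{0..<n}. v i $ k * ((lam i - lam m) * w $ i))"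
          using Pv[OF w' k] unfolding w'_def by simp
        also have "\<dots> = (\<Sum>i\<in>{0..<n}. lam i * v i $ k * w $ i) - lam m * (\<Sum>i\<in>{0..<n}. v i $ k * w $ i)"
          by (simp add: sum_subtractf sum_distrib_left algebra_simps)
        also have "\<dots> = (A *\<^sub>v (P *\<^sub>v w)) $ k - lam m * (P *\<^sub>v w) $ k"
          using APv[OF w k] Pv[OF w k] by simp
        also have "\<dots> = 0" using Pw A k by simp
        finally show "(P *\<^sub>v w') $ k = 0\<^sub>v n $ k" using k by simp
      qed (use P w' in auto)
      moreover have "\<forall>k. m \<le> k \<longrightarrow> k < n \<longrightarrow> w' $ k = 0"
      proof (intro allI impI)
        fix k assume km: "m \<le> k" "k < n"
        show "w' $ k = 0"
        proof (cases "k = m")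
          case False
          hence "w $ k = 0" using supp km by auto
          thus ?thesis using km unfolding w'_def by simp
        qed (use km in \<open>simp add: w'_def\<close>)
      qed
      ultimately have "w' = 0\<^sub>v n" using Suc.IH mn w' by auto
      hence low: "w $ k = 0" if "k < m" for k
        using that mn lam_inj[of k m] unfolding w'_def
        by (metis (no_types, lifting) index_vec index_zero_vec(1) less_trans mult_eq_0_iff
            order.strict_implies_not_eq right_minus_eq)
      have wz: "w $ k = 0" if "k < n" "k \<noteq> m" for k
        using low supp that by (metis Suc_leI linorder_neqE_nat)
      obtain k where k: "k < n" "v m $ k \<noteq> 0"
        using vnz[OF mn] vc[OF mn] by (metis carrier_vecD eq_vecI index_zero_vec)
      have "(P *\<^sub>v w) $ k = (\<Sum>i\<in>{0..<n}. if i = m then v m $ k * w $ m else 0)"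
        unfolding Pv[OF w k(1)] by (rule sum.cong) (auto simp: wz)
      also have "\<dots> = v m $ k * w $ m" using mn by simp
      finally have "v m $ k * w $ m = 0" using Pw k by simp
      hence "w $ m = 0" using k by simp
      thus "w = 0\<^sub>v n" using wz w by (intro eq_vecI) auto
    qed
  qed
  have "det P \<noteq> 0"
    using det_0_iff_vec_prod_zero_field[OF P] ker[of n] by auto
  from det_non_zero_imp_unit[OF P this, of "()"]
  obtain Q where Q: "Q \<in> carrier_mat n n" and PQ: "P * Q = 1\<^sub>m n" and QP: "Q * P = 1\<^sub>m n"
    unfolding Units_def by (auto simp: ring_mat_simps)
  note as = assoc_mult_mat[of _ n n _ n _ n]
  have as': "X1 * X2 * X3 = X1 * (X2 * X3)"
    if "X1 \<in> carrier_mat n n" "X2 \<in> carrier_mat n n" "X3 \<in> carrier_mat n n" for X1 X2 X3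
    using assoc_mult_mat[OF that] .
  have PQX: "P * (Q * M) = M" if M: "M \<in> carrier_mat n n" for M
  proof -
    have "P * (Q * M) = (P * Q) * M" using as'[OF P Q M] by simp
    also have "\<dots> = M" using PQ M by simp
    finally show ?thesis .
  qed
  have QPX: "Q * (P * M) = M" if M: "M \<in> carrier_mat n n" for M
  proof -
    have "Q * (P * M) = (Q * P) * M" using as'[OF Q P M] by simp
    also have "\<dots> = M" using QP M by simp
    finally show ?thesis .
  qed
  have QAP: "Q * (A * P) = D" using AP QPX D by simp
  have diagonal: "\<And>k l. k < n \<Longrightarrow> l < n \<Longrightarrow> k \<noteq> l \<Longrightarrow> (Q * (M * P)) $$ (k,l) = 0"
    if M: "M \<in> carrier_mat n n" and AM: "A * M = M * A" for M
  proof -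
    fix k l assume kl: "k < n" "l < n" "k \<noteq> l"
    let ?M = "Q * (M * P)"
    have M': "?M \<in> carrier_mat n n" using M P Q by auto
    have AMX: "A * (M * Z) = M * (A * Z)" if Z: "Z \<in> carrier_mat n n" for Z
    proof -
      have "A * (M * Z) = (A * M) * Z" using as'[OF A M Z] by simp
      also have "\<dots> = (M * A) * Z" using AM by simp
      also have "\<dots> = M * (A * Z)" using as'[OF M A Z] by simp
      finally show ?thesis .
    qed
    have AP': "A * P \<in> carrier_mat n n" "M * P \<in> carrier_mat n n" using A P M by auto
    have "D * ?M = Q * (A * P) * (Q * (M * P))" using QAP by simp
    also have "\<dots> = Q * ((A * P) * (Q * (M * P)))" using as'[OF Q AP'(1) M'] .
    also have "(A * P) * (Q * (M * P)) = A * (P * (Q * (M * P)))" using as'[OF A P M'] .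
    also have "P * (Q * (M * P)) = M * P" using PQX[OF AP'(2)] .
    also have "A * (M * P) = M * (A * P)" using AMX[OF P] .
    also have "Q * (M * (A * P)) = (Q * (M * P)) * (Q * (A * P))"
    proof -
      have "(Q * (M * P)) * (Q * (A * P)) = Q * ((M * P) * (Q * (A * P)))"
        using as'[OF Q AP'(2)] A P Q by auto
      also have "(M * P) * (Q * (A * P)) = M * (P * (Q * (A * P)))"
        using as'[OF M P] A P Q by auto
      also have "P * (Q * (A * P)) = A * P" using PQX[OF AP'(1)] .
      finally show ?thesis by simp
    qed
    also have "\<dots> = ?M * D" using QAP by simp
    finally have "D * ?M = ?M * D" .
    hence "(D * ?M) $$ (k,l) = (?M * D) $$ (k,l)" by simp
    hence "lam k * ?M $$ (k,l) = ?M $$ (k,l) * lam l"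
      using diag_entry_mult[OF D M' dD kl(1,2)] diag_entry_mult_right[OF D M' dD kl(1,2)] kl
      by (simp add: D_def)
    hence "(lam k - lam l) * ?M $$ (k,l) = 0" by (simp add: algebra_simps)
    thus "?M $$ (k,l) = 0" using lam_inj[OF kl(1,2)] kl(3) by auto
  qed
  have comm: "(Q * (B * P)) * (Q * (C * P)) = (Q * (C * P)) * (Q * (B * P))"
    by (rule diag_commute[of _ n]) (use diagonal[OF B AB] diagonal[OF C AC] B C P Q in auto)
  have expand: "P * ((Q * (M1 * P)) * (Q * (M2 * P))) * Q = M1 * M2"
    if M1: "M1 \<in> carrier_mat n n" and M2: "M2 \<in> carrier_mat n n" for M1 M2
  proof -
    have c: "M1 * P \<in> carrier_mat n n" "M2 * P \<in> carrier_mat n n" "Q * (M2 * P) \<in> carrier_mat n n"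
      "M1 * M2 \<in> carrier_mat n n"
      using M1 M2 P Q by auto
    have "(Q * (M1 * P)) * (Q * (M2 * P)) = Q * ((M1 * P) * (Q * (M2 * P)))"
      using as'[OF Q c(1) c(3)] .
    also have "(M1 * P) * (Q * (M2 * P)) = M1 * (P * (Q * (M2 * P)))" using as'[OF M1 P c(3)] .
    also have "P * (Q * (M2 * P)) = M2 * P" using PQX[OF c(2)] .
    also have "M1 * (M2 * P) = (M1 * M2) * P" using as'[OF M1 M2 P] by simp
    finally have e: "(Q * (M1 * P)) * (Q * (M2 * P)) = Q * ((M1 * M2) * P)" .
    have "P * (Q * ((M1 * M2) * P)) = (M1 * M2) * P" using PQX c(4) P by auto
    hence "P * ((Q * (M1 * P)) * (Q * (M2 * P))) * Q = (M1 * M2) * P * Q" using e by simp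
    also have "\<dots> = M1 * M2" using as'[OF c(4) P Q] PQ c(4) using right_mult_one_mat[OF c(4)] by simp
    finally show ?thesis .
  qed
  have "B * C = P * ((Q * (B * P)) * (Q * (C * P))) * Q" using expand[OF B C] by simp
  also have "\<dots> = P * ((Q * (C * P)) * (Q * (B * P))) * Q" by (simp only: comm)
  also have "\<dots> = C * B" using expand[OF C B] .
  finally show ?thesis .
qed

lemma poly_prod_linear_root:
  fixes M :: "'b::field multiset"
  assumes "a \<in># M"
  shows "poly (\<Prod>x\<in>#M. [:-x, 1:]) a = 0"
proof -
  obtain M1 where M1: "M = add_mset a M1" using multi_member_split[OF assms] by blast
  have "poly (\<Prod>x\<in>#M. [:-x, 1:]) a = poly [:-a, 1:] a * poly (\<Prod>x\<in>#M1. [:-x, 1:]) a"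
    unfolding M1 by (simp only: image_mset_add_mset prod_mset.add_mset poly_mult)
  also have "poly [:-a, 1:] a = 0" by simp
  finally show ?thesis by simp
qed

lemma bezout_coprime:
  fixes a b :: "'b::euclidean_ring"
  assumes "coprime a b"
  shows "\<exists>u v. u * a + v * b = 1"
  using assms
proof (induction "euclidean_size b" arbitrary: a b rule: less_induct)
  case less
  show ?case
  proof (cases "b = 0")
    case True
    then have "is_unit a" using less.prems by simp
    then obtain k where "1 = a * k" by (auto elim: dvdE)
    hence "k * a + 0 * b = 1" by (simp add: mult.commute)
    thus ?thesis by blast
  next
    case False
    have cop: "coprime b (a mod b)" using less.prems False by (simp add: coprime_commute)
    have "euclidean_size (a mod b) < euclidean_size b" using False by (rule mod_size_less)
    then obtain u v where uv: "u * b + v * (a mod b) = 1" using less.hyps cop by blast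
    have "a mod b = a - (a div b) * b" by (simp add: minus_div_mult_eq_mod)
    moreover have "v * a + (u - v * (a div b)) * b = u * b + v * (a - (a div b) * b)"
      by (simp add: algebra_simps)
    ultimately have "v * a + (u - v * (a div b)) * b = 1" using uv by simp
    thus ?thesis by blast
  qed
qed

lemma sep_commute:
  fixes A B C :: "'a::field_char_0 mat"
  assumes A: "A \<in> carrier_mat n n" and B: "B \<in> carrier_mat n n" and C: "C \<in> carrier_mat n n"
    and cop: "coprime (char_poly A) (pderiv (char_poly A))"
    and AB: "A * B = B * A" and AC: "A * C = C * A"
  shows "B * C = C * B"
proof -
  interpret h: field_hom "to_ac :: 'a \<Rightarrow> 'a alg_closure" by unfold_locales auto
  interpret p: map_poly_comm_ring_hom "to_ac :: 'a \<Rightarrow> 'a alg_closure" ..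
  define A' where "A' = map_mat to_ac A"
  define B' where "B' = map_mat to_ac B"
  define C' where "C' = map_mat to_ac C"
  have A': "A' \<in> carrier_mat n n" and B': "B' \<in> carrier_mat n n" and C': "C' \<in> carrier_mat n n"
    using A B C unfolding A'_def B'_def C'_def by auto
  have AB': "A' * B' = B' * A'"
    unfolding A'_def B'_def using h.mat_hom_mult[OF A B] h.mat_hom_mult[OF B A] AB by simp
  have AC': "A' * C' = C' * A'"
    unfolding A'_def C'_def using h.mat_hom_mult[OF A C] h.mat_hom_mult[OF C A] AC by simp
  define \<chi> where "\<chi> = char_poly A"
  define \<chi>' where "\<chi>' = char_poly A'"
  have cp: "\<chi>' = map_poly to_ac \<chi>" unfolding \<chi>'_def \<chi>_def A'_def by (rule h.char_poly_hom[OF A])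
  obtain u v where uv: "u * \<chi> + v * pderiv \<chi> = 1"
    using bezout_coprime[of \<chi> "pderiv \<chi>"] cop unfolding \<chi>_def by blast
  have uv': "map_poly to_ac u * \<chi>' + map_poly to_ac v * pderiv \<chi>' = 1"
  proof -
    have "map_poly to_ac (u * \<chi> + v * pderiv \<chi>) = 1" using uv by simp
    thus ?thesis unfolding cp by (simp add: p.hom_add p.hom_mult h.map_poly_pderiv)
  qed
  have nz: "\<chi>' \<noteq> 0" and lc: "Polynomial.lead_coeff \<chi>' = 1" and deg: "Polynomial.degree \<chi>' = n"
    using degree_monic_char_poly[OF A'] unfolding \<chi>'_def by auto
  have "\<forall>a. \<not> (poly \<chi>' a = 0 \<and> poly (pderiv \<chi>') a = 0)"
  proof (intro allI notI)
    fix a assume "poly \<chi>' a = 0 \<and> poly (pderiv \<chi>') a = 0"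
    hence "poly (map_poly to_ac u * \<chi>' + map_poly to_ac v * pderiv \<chi>') a = 0" by simp
    thus False using uv' by simp
  qed
  hence rsf: "rsquarefree \<chi>'" by (simp add: rsquarefree_roots)
  obtain M where M: "size M = Polynomial.degree \<chi>'" "\<chi>' = Polynomial.smult (Polynomial.lead_coeff \<chi>') (\<Prod>x\<in>#M. [:-x, 1:])"
    using alg_closed_imp_factorization[OF nz] by blast
  have Mp: "\<chi>' = (\<Prod>x\<in>#M. [:-x, 1:])" using M(2) lc by simp
  have cnt: "count M a \<le> 1" for a
  proof (rule ccontr)
    assume "\<not> count M a \<le> 1"
    hence "count M a > 0" by linarith
    hence "a \<in># M" by simp
    then obtain M1 where M1: "M = add_mset a M1" by (metis multi_member_split)
    have "count M1 a > 0" using \<open>\<not> count M a \<le> 1\<close> unfolding M1 by simp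
    hence "a \<in># M1" by simp
    then obtain M2 where M2: "M1 = add_mset a M2" by (metis multi_member_split)
    have "\<chi>' = [:-a, 1:] ^ 2 * (\<Prod>x\<in>#M2. [:-x, 1:])"
      unfolding Mp M1 M2 by (simp only: image_mset_add_mset prod_mset.add_mset power2_eq_square mult.assoc)
    hence "[:-a, 1:] ^ 2 dvd \<chi>'" by (metis dvd_triv_left)
    hence "2 \<le> Polynomial.order a \<chi>'" using nz order_divides by blast
    moreover have "Polynomial.order a \<chi>' = 0 \<or> Polynomial.order a \<chi>' = 1"
      using rsf unfolding rsquarefree_def by blast
    ultimately show False by linarith
  qed
  obtain xs where xs: "mset xs = M" using ex_mset by blast
  have dist: "distinct xs"
    unfolding distinct_count_atmost_1 xs
  proof
    fix a show "count M a = (if a \<in> set xs then 1 else 0)"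
    proof (cases "a \<in># M")
      case True
      hence "count M a \<noteq> 0" by simp
      hence "count M a = 1" using cnt[of a] by linarith
      moreover have "a \<in> set xs" using True xs by auto
      ultimately show ?thesis by simp
    next
      case False
      moreover have "a \<notin> set xs" using False xs by auto
      ultimately show ?thesis by (simp add: not_in_iff)
    qed
  qed
  have len: "length xs = n"
  proof -
    have "length xs = size (mset xs)" by simp
    thus ?thesis using xs M(1) deg by simp
  qed
  have root: "poly \<chi>' a = 0" if "a \<in># M" for a
    using poly_prod_linear_root[OF that] Mp by simp
  have "B' * C' = C' * B'"
  proof (rule comm_distinct_eig[OF A' B' C' _ _ AB' AC', of "\<lambda>i. xs ! i"])
    fix i j assume "i < n" "j < n" "xs ! i = xs ! j"
    thus "i = j" using dist len by (simp add: nth_eq_iff_index_eq)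
  next
    fix i assume "i < n"
    hence "xs ! i \<in># mset xs" using len by simp
    hence "xs ! i \<in># M" using xs by simp
    from root[OF this] show "eigenvalue A' (xs ! i)"
      using eigenvalue_root_char_poly[OF A', of "xs ! i"] unfolding \<chi>'_def by simp
  qed
  hence e: "map_mat to_ac (B * C) = map_mat to_ac (C * B)"
    unfolding B'_def C'_def using h.mat_hom_mult[OF B C] h.mat_hom_mult[OF C B] by simp
  show ?thesis
  proof (rule eq_matI)
    fix i j assume ij: "i < dim_row (C * B)" "j < dim_col (C * B)"
    have "(map_mat to_ac (B * C)) $$ (i,j) = (map_mat to_ac (C * B)) $$ (i,j)" using e by simp
    hence "to_ac ((B * C) $$ (i,j)) = to_ac ((C * B) $$ (i,j))" using ij B C by simp
    thus "(B * C) $$ (i,j) = (C * B) $$ (i,j)" by simp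
  qed (use B C in auto)
qed

lemma massoc:
  assumes "X1 \<in> carrier_mat n n" "X2 \<in> carrier_mat n n" "X3 \<in> carrier_mat n n"
  shows "X1 * X2 * X3 = X1 * (X2 * X3)"
  using assoc_mult_mat[OF assms] .

lemma GL_inv:
  fixes g :: "'b::field mat"
  assumes "g \<in> GL n"
  shows "mat_inv g \<in> carrier_mat n n \<and> g * mat_inv g = 1\<^sub>m n \<and> mat_inv g * g = 1\<^sub>m n"
proof -
  have g: "g \<in> carrier_mat n n" and inv: "invertible_mat g" using assms unfolding GL_def by auto
  obtain B where gB: "g * B = 1\<^sub>m (dim_row g)" and Bg: "B * g = 1\<^sub>m (dim_row B)"
    using inv unfolding invertible_mat_def inverts_mat_def by blast
  have "dim_col B = n" using arg_cong[OF gB, of dim_col] g by simp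
  moreover have "dim_row B = n" using arg_cong[OF Bg, of dim_col] g by simp
  ultimately have B: "B \<in> carrier_mat n n" by auto
  have "g \<in> Units (ring_mat TYPE('b) n ())"
    unfolding Units_def using g B gB Bg by (auto simp: ring_mat_simps)
  have "mat_inverse g \<noteq> None"
  proof
    assume "mat_inverse g = None"
    from mat_inverse(1)[OF g this, of "()"] \<open>g \<in> Units (ring_mat TYPE('b) n ())\<close> show False by simp
  qed
  then obtain B' where "mat_inverse g = Some B'" by auto
  with mat_inverse(2)[OF g this] show ?thesis unfolding mat_inv_def by auto
qed

theorem mainTheorem9:
  fixes c :: "'a::field_char_0 \<Rightarrow> 'a" and n :: nat and \<gamma> :: "'a mat"
  assumes "quad_conj c"
    and "\<gamma> \<in> GL n"
    and "map_mat c \<gamma> * \<gamma> \<in> GL_fix c n"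
    and "regular_semisimple n (map_mat c \<gamma> * \<gamma>)"
  shows "T_set c n \<gamma> \<subseteq> GL_fix c n
    \<and> T_set c n \<gamma> = {g \<in> GL_fix c n. g * (map_mat c \<gamma> * \<gamma>) = (map_mat c \<gamma> * \<gamma>) * g}"
proof -
  note qc = assms(1)[unfolded quad_conj_def]
  have cadd: "c (x + y) = c x + c y" and cmul: "c (x * y) = c x * c y" and c1: "c 1 = 1"
    and cc: "c (c x) = x" for x y using qc by auto
  have c0: "c 0 = 0" using cadd[of 0 0] by simp
  interpret ch: comm_ring_hom c by unfold_locales (auto simp: cadd cmul c1 c0)
  define G where "G = \<gamma>"
  define Gb where "Gb = map_mat c \<gamma>"
  define A where "A = Gb * G"
  have G: "G \<in> carrier_mat n n" using assms(2) unfolding G_def GL_def by auto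
  have Gb: "Gb \<in> carrier_mat n n" using G unfolding Gb_def G_def by auto
  have A: "A \<in> carrier_mat n n" using G Gb unfolding A_def by auto
  have mmc: "map_mat c (W * V) = map_mat c W * map_mat c V"
    if "W \<in> carrier_mat n n" "V \<in> carrier_mat n n" for W V
    using ch.mat_hom_mult[OF that] .
  have ccm: "map_mat c (map_mat c W) = W" for W by (rule eq_matI) (auto simp: cc)
  have fixm: "map_mat c W = W" if "W \<in> GL_fix c n" for W
  proof -
    have W: "W \<in> carrier_mat n n" using that unfolding GL_fix_def GL_def by auto
    show ?thesis using that W unfolding GL_fix_def by (intro eq_matI) auto
  qed
  have fixI: "W \<in> GL_fix c n" if "W \<in> GL n" "map_mat c W = W" for W
  proof -
    have W: "W \<in> carrier_mat n n" using that unfolding GL_def by auto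
    have "c (W $$ (i,j)) = W $$ (i,j)" if "i < n" "j < n" for i j
      using arg_cong[OF \<open>map_mat c W = W\<close>, of "\<lambda>M. M $$ (i,j)"] W that by simp
    thus ?thesis using that unfolding GL_fix_def by auto
  qed
  have "map_mat c A = A" using fixm[OF assms(3)] unfolding A_def Gb_def G_def by simp
  moreover have "map_mat c A = G * Gb" unfolding A_def using mmc[OF Gb G] ccm
    unfolding Gb_def G_def by simp
  ultimately have GGb: "G * Gb = A" by simp
  have GA: "A * G = G * A"
  proof -
    have "G * A = (G * Gb) * G" unfolding A_def using massoc[OF G Gb G] by simp
    thus ?thesis using GGb by simp
  qed
  have cop: "coprime (char_poly A) (pderiv (char_poly A))"
    using assms(4) unfolding regular_semisimple_def A_def Gb_def G_def by simp
  have key: "g * G = G * g" if g: "g \<in> carrier_mat n n" and gA: "A * g = g * A" for g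
    using sep_commute[OF A g G cop gA GA] .
  define S where "S = {g \<in> GL_fix c n. g * (map_mat c \<gamma> * \<gamma>) = (map_mat c \<gamma> * \<gamma>) * g}"
  have TS: "T_set c n \<gamma> \<subseteq> S"
  proof
    fix g assume "g \<in> T_set c n \<gamma>"
    hence gGL: "g \<in> GL n" and eq: "mat_inv g * G * map_mat c g = G"
      unfolding T_set_def G_def by auto
    define h where "h = mat_inv g"
    define gb where "gb = map_mat c g"
    have g: "g \<in> carrier_mat n n" using gGL unfolding GL_def by auto
    have gb: "gb \<in> carrier_mat n n" using g unfolding gb_def by auto
    have h: "h \<in> carrier_mat n n" and gh: "g * h = 1\<^sub>m n" and hg: "h * g = 1\<^sub>m n"
      using GL_inv[OF gGL] unfolding h_def by auto
    have eq': "h * (G * gb) = G" using eq massoc[OF h G gb] unfolding h_def gb_def by simp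
    have Ggb: "G * gb = g * G"
    proof -
      have "g * (h * (G * gb)) = (g * h) * (G * gb)" using massoc[OF g h] G gb by auto
      also have "\<dots> = G * gb" using gh G gb by simp
      finally show ?thesis using eq' by simp
    qed
    have Gbg: "Gb * g = gb * Gb"
    proof -
      have "map_mat c (G * gb) = map_mat c (g * G)" using Ggb by simp
      thus ?thesis using mmc[OF G gb] mmc[OF g G] ccm unfolding Gb_def G_def gb_def by simp
    qed
    have gA: "A * g = g * A"
    proof -
      have "g * A = g * (G * Gb)" using GGb by simp
      also have "\<dots> = (g * G) * Gb" using massoc[OF g G Gb] by simp
      also have "\<dots> = (G * gb) * Gb" using Ggb by simp
      also have "\<dots> = G * (gb * Gb)" using massoc[OF G gb Gb] by simp
      also have "\<dots> = G * (Gb * g)" using Gbg by simp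
      also have "\<dots> = (G * Gb) * g" using massoc[OF G Gb g] by simp
      finally show ?thesis using GGb by simp
    qed
    have gG: "g * G = G * g" using key[OF g gA] .
    have "G * gb = G * g" using Ggb gG by simp
    hence "mat_inv G * (G * gb) = mat_inv G * (G * g)" by simp
    moreover have "mat_inv G \<in> carrier_mat n n" "mat_inv G * G = 1\<^sub>m n"
      using GL_inv[of G n] assms(2) unfolding G_def by auto
    ultimately have "gb = g" using massoc[of "mat_inv G" n G gb] massoc[of "mat_inv G" n G g] G g gb
      by simp
    hence "g \<in> GL_fix c n" using fixI[OF gGL] unfolding gb_def by simp
    thus "g \<in> S" using gA unfolding S_def A_def Gb_def G_def by simp
  qed
  have ST: "S \<subseteq> T_set c n \<gamma>"
  proof
    fix g assume "g \<in> S"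
    hence gF: "g \<in> GL_fix c n" and gA': "g * A = A * g"
      unfolding S_def A_def Gb_def G_def by auto
    have gGL: "g \<in> GL n" using gF unfolding GL_fix_def by auto
    have g: "g \<in> carrier_mat n n" using gGL unfolding GL_def by auto
    have gb: "map_mat c g = g" using fixm[OF gF] .
    have h: "mat_inv g \<in> carrier_mat n n" and hg: "mat_inv g * g = 1\<^sub>m n"
      using GL_inv[OF gGL] by auto
    have gG: "g * G = G * g" using key[OF g gA'[symmetric]] .
    have "mat_inv g * G * map_mat c g = mat_inv g * (G * g)" using gb massoc[OF h G g] by simp
    also have "\<dots> = mat_inv g * (g * G)" using gG by simp
    also have "\<dots> = (mat_inv g * g) * G" using massoc[OF h g G] by simp
    also have "\<dots> = G" using hg G by simp
    finally show "g \<in> T_set c n \<gamma>" using gGL unfolding T_set_def G_def by simp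
  qed
  have "T_set c n \<gamma> = S" using TS ST by blast
  moreover have "S \<subseteq> GL_fix c n" unfolding S_def by auto
  ultimately show ?thesis unfolding S_def by auto
qed

end
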